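(* Let $A=\mathbb Z[\mathbb R]$ be the integral group ring of the additive group $\mathbb R$, with elements written as finite formal sums $\sum c_\alpha[\alpha]$. Let $d:A\to\mathbb Z$ and $v:A\to\mathbb R$ be the additive homomorphisms with $d([\alpha])=1$, $v([\alpha])=\alpha$, and let $(x,y)\mapsto x\vee y$ be the bi-additive map $A\times A\to A$ with $[\alpha]\vee[\beta]=[\max\{\alpha,\beta\}]$. Let $A^+$ be the set of $\sum_\alpha c_\alpha[\alpha]$ with $c_\alpha=0$ for $\alpha<0$ and $c_\alpha\ge0$ for all $\alpha$. Then for all $\sigma,\tau\in A^+$, $$v(\sigma\vee\tau)\le d(\tau)v(\sigma)+d(\sigma)v(\tau)-\min\{v(\sigma),v(\tau)\}.$$ *)

theory Defs
  imports Complex_Main "HOL-Library.Poly_Mapping"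
begin

(* The integral group ring Z[R]: finitely supported maps real => int; [a] is Poly_Mapping.single a 1. *)

type_synonym grR = "real \<Rightarrow>\<^sub>0 int"

definition gr_d :: "grR \<Rightarrow> int" where
  "gr_d x = (\<Sum>a\<in>Poly_Mapping.keys x. Poly_Mapping.lookup x a)"

definition gr_v :: "grR \<Rightarrow> real" where
  "gr_v x = (\<Sum>a\<in>Poly_Mapping.keys x. of_int (Poly_Mapping.lookup x a) * a)"

definition gr_join :: "grR \<Rightarrow> grR \<Rightarrow> grR" where
  "gr_join x y = (\<Sum>(a,b)\<in>Poly_Mapping.keys x \<times> Poly_Mapping.keys y.
      Poly_Mapping.single (max a b) (Poly_Mapping.lookup x a * Poly_Mapping.lookup y b))"

definition gr_pos :: "grR set" where
  "gr_pos = {x. (\<forall>a. a < 0 \<longrightarrow> Poly_Mapping.lookup x a = 0) \<and> (\<forall>a. Poly_Mapping.lookup x a \<ge> 0)}"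

end

theory Submission
  imports Defs
begin

lemma gr_v_superset:
  assumes "finite S" "Poly_Mapping.keys x \<subseteq> S"
  shows "gr_v x = (\<Sum>a\<in>S. of_int (Poly_Mapping.lookup x a) * a)"
  unfolding gr_v_def
  by (rule sum.mono_neutral_left) (use assms in \<open>auto simp: in_keys_iff\<close>)

lemma gr_d_superset:
  assumes "finite S" "Poly_Mapping.keys x \<subseteq> S"
  shows "gr_d x = (\<Sum>a\<in>S. Poly_Mapping.lookup x a)"
  unfolding gr_d_def
  by (rule sum.mono_neutral_left) (use assms in \<open>auto simp: in_keys_iff\<close>)

lemma gr_v_add: "gr_v (x + y) = gr_v x + gr_v y"
proof -
  let ?S = "Poly_Mapping.keys x \<union> Poly_Mapping.keys y"
  have f: "finite ?S" by simp
  have "gr_v (x+y) = (\<Sum>a\<in>?S. of_int (Poly_Mapping.lookup (x+y) a) * a)"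
    by (rule gr_v_superset[OF f]) (simp add: keys_add)
  also have "\<dots> = (\<Sum>a\<in>?S. of_int (Poly_Mapping.lookup x a) * a)
     + (\<Sum>a\<in>?S. of_int (Poly_Mapping.lookup y a) * a)"
    by (simp add: lookup_add distrib_right sum.distrib)
  also have "\<dots> = gr_v x + gr_v y"
    by (simp add: gr_v_superset[OF f])
  finally show ?thesis .
qed

lemma gr_v_zero: "gr_v 0 = 0"
  by (simp add: gr_v_def)

lemma gr_v_sum: "gr_v (sum f A) = (\<Sum>i\<in>A. gr_v (f i))"
  by (induction A rule: infinite_finite_induct) (auto simp: gr_v_zero gr_v_add)

lemma gr_v_single: "gr_v (Poly_Mapping.single a c) = of_int c * a"
  by (simp add: gr_v_def)

lemma key_ineq_half:
  fixes s t :: "real \<Rightarrow> real"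
  assumes "finite A" "finite B" "A \<noteq> {}" "B \<noteq> {}"
    "\<And>a. a \<in> A \<Longrightarrow> a \<ge> 0 \<and> s a \<ge> 1"
    "\<And>b. b \<in> B \<Longrightarrow> b \<ge> 0 \<and> t b \<ge> 1"
    "Max A \<le> Max B"
  shows "(\<Sum>a\<in>A. s a * a) \<le> (\<Sum>a\<in>A. \<Sum>b\<in>B. s a * t b * min a b)"
proof -
  have mB: "Max B \<in> B" using assms by simp
  have "(\<Sum>a\<in>A. s a * a) \<le> (\<Sum>a\<in>A. s a * t (Max B) * min a (Max B))"
  proof (rule sum_mono)
    fix a assume a: "a \<in> A"
    have "a \<le> Max B" using assms a by (meson Max_ge order_trans)
    hence "min a (Max B) = a" by simp
    moreover have "s a * a * 1 \<le> s a * a * t (Max B)"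
      using assms(5)[OF a] assms(6)[OF mB] by (intro mult_left_mono) auto
    hence "s a * a \<le> s a * t (Max B) * a" by (simp add: mult_ac)
    ultimately show "s a * a \<le> s a * t (Max B) * min a (Max B)" by simp
  qed
  also have "\<dots> \<le> (\<Sum>a\<in>A. \<Sum>b\<in>B. s a * t b * min a b)"
  proof (rule sum_mono)
    fix a assume a: "a \<in> A"
    show "s a * t (Max B) * min a (Max B) \<le> (\<Sum>b\<in>B. s a * t b * min a b)"
    proof -
      have "\<forall>x\<in>B - {Max B}. 0 \<le> s a * t x * min a x"
      proof
        fix x assume x: "x \<in> B - {Max B}"
        have "s a \<ge> 0" "a \<ge> 0" using assms(5)[OF a] by auto
        moreover have "t x \<ge> 0" "x \<ge> 0" using assms(6)[of x] x by auto
        ultimately show "0 \<le> s a * t x * min a x" by simp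
      qed
      then show ?thesis
        using member_le_sum[OF mB, where f="\<lambda>b. s a * t b * min a b"] assms(2) by auto
    qed
  qed
  finally show ?thesis .
qed

lemma key_ineq:
  fixes s t :: "real \<Rightarrow> real"
  assumes "finite A" "finite B"
    "\<And>a. a \<in> A \<Longrightarrow> a \<ge> 0 \<and> s a \<ge> 1"
    "\<And>b. b \<in> B \<Longrightarrow> b \<ge> 0 \<and> t b \<ge> 1"
  shows "min (\<Sum>a\<in>A. s a * a) (\<Sum>b\<in>B. t b * b) \<le> (\<Sum>a\<in>A. \<Sum>b\<in>B. s a * t b * min a b)"
proof -
  have nA: "(\<Sum>a\<in>A. s a * a) \<ge> 0" by (rule sum_nonneg) (use assms in \<open>auto intro: mult_nonneg_nonneg order_trans[OF zero_le_one]\<close>)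
  have nB: "(\<Sum>b\<in>B. t b * b) \<ge> 0" by (rule sum_nonneg) (use assms in \<open>auto intro: mult_nonneg_nonneg order_trans[OF zero_le_one]\<close>)
  show ?thesis
  proof (cases "A = {} \<or> B = {}")
    case True thus ?thesis using nA nB by (auto simp: min_def)
  next
    case False
    show ?thesis
    proof (cases "Max A \<le> Max B")
      case True
      thus ?thesis using key_ineq_half[OF assms(1,2) _ _ assms(3,4)] False by fastforce
    next
      case c: False
      have "(\<Sum>b\<in>B. t b * b) \<le> (\<Sum>b\<in>B. \<Sum>a\<in>A. t b * s a * min b a)"
        using key_ineq_half[OF assms(2,1) _ _ assms(4,3)] False c by fastforce
      also have "\<dots> = (\<Sum>a\<in>A. \<Sum>b\<in>B. s a * t b * min a b)"
        by (subst sum.swap) (simp add: min.commute mult.commute)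
      finally show ?thesis by simp
    qed
  qed
qed

theorem proposition5p1:
  fixes \<sigma> \<tau> :: grR
  assumes "\<sigma> \<in> gr_pos" and "\<tau> \<in> gr_pos"
  shows "gr_v (gr_join \<sigma> \<tau>) \<le>
    of_int (gr_d \<tau>) * gr_v \<sigma> + of_int (gr_d \<sigma>) * gr_v \<tau> - min (gr_v \<sigma>) (gr_v \<tau>)"
proof -
  define A where "A = Poly_Mapping.keys \<sigma>"
  define B where "B = Poly_Mapping.keys \<tau>"
  define s where "s a = real_of_int (Poly_Mapping.lookup \<sigma> a)" for a
  define t where "t b = real_of_int (Poly_Mapping.lookup \<tau> b)" for b
  have fA: "finite A" and fB: "finite B" by (simp_all add: A_def B_def)
  have hA: "a \<ge> 0 \<and> s a \<ge> 1" if "a \<in> A" for a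
  proof -
    have ne: "Poly_Mapping.lookup \<sigma> a \<noteq> 0" using that by (simp add: A_def in_keys_iff)
    have "Poly_Mapping.lookup \<sigma> a \<ge> 0" using assms(1) by (simp add: gr_pos_def)
    moreover have "\<not> a < 0" using assms(1) ne by (auto simp: gr_pos_def)
    ultimately show ?thesis using ne by (simp add: s_def)
  qed
  have hB: "b \<ge> 0 \<and> t b \<ge> 1" if "b \<in> B" for b
  proof -
    have ne: "Poly_Mapping.lookup \<tau> b \<noteq> 0" using that by (simp add: B_def in_keys_iff)
    have "Poly_Mapping.lookup \<tau> b \<ge> 0" using assms(2) by (simp add: gr_pos_def)
    moreover have "\<not> b < 0" using assms(2) ne by (auto simp: gr_pos_def)
    ultimately show ?thesis using ne by (simp add: t_def)
  qed
  have vs: "gr_v \<sigma> = (\<Sum>a\<in>A. s a * a)" by (simp add: gr_v_def A_def s_def)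
  have vt: "gr_v \<tau> = (\<Sum>b\<in>B. t b * b)" by (simp add: gr_v_def B_def t_def)
  have ds: "of_int (gr_d \<sigma>) = (\<Sum>a\<in>A. s a)" by (simp add: gr_d_def A_def s_def)
  have dt: "of_int (gr_d \<tau>) = (\<Sum>b\<in>B. t b)" by (simp add: gr_d_def B_def t_def)
  have vj: "gr_v (gr_join \<sigma> \<tau>) = (\<Sum>a\<in>A. \<Sum>b\<in>B. s a * t b * max a b)"
    unfolding gr_join_def gr_v_sum
    by (simp add: gr_v_single sum.cartesian_product A_def B_def s_def t_def case_prod_beta)
  have rhs: "of_int (gr_d \<tau>) * gr_v \<sigma> + of_int (gr_d \<sigma>) * gr_v \<tau>
      = (\<Sum>a\<in>A. \<Sum>b\<in>B. s a * t b * (a + b))"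
    unfolding vs vt ds dt
    by (simp add: sum_distrib_left sum_distrib_right sum.distrib algebra_simps sum.swap[of _ B A])
  have mx: "(\<Sum>a\<in>A. \<Sum>b\<in>B. s a * t b * max a b) =
      (\<Sum>a\<in>A. \<Sum>b\<in>B. s a * t b * (a + b)) - (\<Sum>a\<in>A. \<Sum>b\<in>B. s a * t b * min a b)"
  proof -
    have "max a b = (a + b) - min a b" for a b :: real by (simp add: max_def min_def)
    then show ?thesis
      by (simp add: sum_subtractf[symmetric] right_diff_distrib[symmetric] del: max_def min_def)
  qed
  show ?thesis
  proof -
    have k: "min (\<Sum>a\<in>A. s a * a) (\<Sum>b\<in>B. t b * b) \<le> (\<Sum>a\<in>A. \<Sum>b\<in>B. s a * t b * min a b)"
      using key_ineq[OF fA fB, of s t] hA hB by blast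
    show ?thesis unfolding vj mx rhs using k vs vt by simp
  qed
qed

end
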